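(* Let $K=4m$ with $m\ge 5$ and suppose $t=KM/N=K-4$. Then the D2D coded caching rate $R=N/M-1$ is achievable with subpacketization $$F=\frac{K(K-4)\big(3K(K-4)+8\big)}{8}.$$
   Context: D2D coded caching setting: there are $N\ge 1$ files $W_1,\dots,W_N$ and $K\ge 2$ users, each with a cache of size $M$ files, $0<M\le N$, and $t:=KM/N$ is assumed to be a positive integer. A D2D coded caching scheme with (uncoded placement and) subpacketization $F\in\mathbb{N}_+$ is defined as follows. Fix a packet size $b\ge 1$; each file is a sequence of $F$ packets $W_n=(W_n^{(1)},\dots,W_n^{(F)})$, $W_n^{(j)}\in\{0,1\}^b$. Placement: each user $k\in[K]$ stores the packets $\{W_n^{(j)}:(n,j)\in Z_k\}$ for a fixed index set $Z_k\subseteq[N]\times[F]$ with $|Z_k|\le MF$ (independent of demands and file contents). Delivery: for every demand vector $\mathbf d=(d_1,\dots,d_K)\in[N]^K$, each user $k$ broadcasts to all other users $\ell_k(\mathbf d)\in\mathbb{N}$ blocks in $\{0,1\}^b$, each a deterministic function of the packets stored by user $k$; it is required that for all file contents each user $k$ can recover all $F$ packets of $W_{d_k}$ from its stored packets and the blocks sent by the other users. The rate is $R=\max_{\mathbf d}\frac{1}{F}\sum_{k=1}^K\ell_k(\mathbf d)$ (transmitted bits normalized by the file size $Fb$). The rate $R$ is achievable with subpacketization $F$ if such a scheme with rate $R$ exists for every packet size $b\ge 1$. *)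

theory Defs
  imports Complex_Main "HOL-Library.FuncSet"
begin

text \<open>Files are indexed by 1..N, packets by 1..F, users by 1..K.\<close>

definition contents :: "nat \<Rightarrow> nat \<Rightarrow> nat \<Rightarrow> (nat \<times> nat \<Rightarrow> bool list) set" where
  "contents N F b = {W. \<forall>n\<in>{1..N}. \<forall>j\<in>{1..F}. length (W (n, j)) = b}"

definition demands :: "nat \<Rightarrow> nat \<Rightarrow> (nat \<Rightarrow> nat) set" where
  "demands N K = PiE {1..K} (\<lambda>_. {1..N})"

definition stored :: "(nat \<times> nat) set \<Rightarrow> (nat \<times> nat \<Rightarrow> bool list) \<Rightarrow> (nat \<times> nat \<Rightarrow> bool list)" where
  "stored Z W = (\<lambda>p. if p \<in> Z then W p else [])"

text \<open>A D2D coded caching scheme (uncoded placement) with N files, K users, cache size M,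
  subpacketization F, packet size b, and rate R.
  Z k: placement index set of user k;
  enc d k: blocks broadcast by user k under demand d, a function of its stored packets;
  ell d k: number of blocks sent by user k under demand d;
  dec d k: decoder of user k from its stored packets and the transmissions of the other users.\<close>
definition d2d_scheme ::
  "nat \<Rightarrow> nat \<Rightarrow> real \<Rightarrow> nat \<Rightarrow> nat \<Rightarrow> real \<Rightarrow> bool" where
  "d2d_scheme N K M F b R \<longleftrightarrow>
    (\<exists>(Z :: nat \<Rightarrow> (nat \<times> nat) set)
      (enc :: (nat \<Rightarrow> nat) \<Rightarrow> nat \<Rightarrow> (nat \<times> nat \<Rightarrow> bool list) \<Rightarrow> bool list list)
      (ell :: (nat \<Rightarrow> nat) \<Rightarrow> nat \<Rightarrow> nat)
      (dec :: (nat \<Rightarrow> nat) \<Rightarrow> nat \<Rightarrow> (nat \<times> nat \<Rightarrow> bool list)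
               \<Rightarrow> (nat \<Rightarrow> bool list list) \<Rightarrow> nat \<Rightarrow> bool list).
      (\<forall>k\<in>{1..K}. Z k \<subseteq> {1..N} \<times> {1..F} \<and> real (card (Z k)) \<le> M * real F) \<and>
      (\<forall>d\<in>demands N K. \<forall>k\<in>{1..K}. \<forall>W\<in>contents N F b.
          length (enc d k (stored (Z k) W)) = ell d k \<and>
          (\<forall>blk\<in>set (enc d k (stored (Z k) W)). length blk = b)) \<and>
      (\<forall>d\<in>demands N K. \<forall>k\<in>{1..K}. \<forall>W\<in>contents N F b. \<forall>j\<in>{1..F}.
          dec d k (stored (Z k) W)
              (\<lambda>i. if i \<in> {1..K} \<and> i \<noteq> k then enc d i (stored (Z i) W) else [])
              j = W (d k, j)) \<and>
      R = Max ((\<lambda>d. (\<Sum>k=1..K. real (ell d k)) / real F) ` demands N K))"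

definition d2d_achievable :: "nat \<Rightarrow> nat \<Rightarrow> real \<Rightarrow> nat \<Rightarrow> real \<Rightarrow> bool" where
  "d2d_achievable N K M F R \<longleftrightarrow> (\<forall>b\<ge>1. d2d_scheme N K M F b R)"

end

theory Submission
  imports Defs
begin

definition xorv :: "bool list \<Rightarrow> bool list \<Rightarrow> bool list" where
  "xorv a c = map2 (\<noteq>) a c"

lemma xorv_comm: "xorv a c = xorv c a"
  unfolding xorv_def by (rule nth_equalityI) auto

lemma xorv_assoc: "xorv a (xorv c e) = xorv (xorv a c) e"
  unfolding xorv_def by (rule nth_equalityI) auto

lemma xorv_length: "length (xorv a c) = min (length a) (length c)"
  unfolding xorv_def by simp

lemma xorv_cancel: "length c = length a \<Longrightarrow> xorv (xorv a c) c = a"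
  unfolding xorv_def by (rule nth_equalityI) auto

lemma foldr_xorv_length:
  "(\<forall>v\<in>set xs. length (f v) = b) \<Longrightarrow> length (foldr xorv (map f xs) (replicate b False)) = b"
  by (induction xs) (auto simp: xorv_length)

lemma foldr_xorv_pick:
  "distinct xs \<Longrightarrow> k \<in> set xs \<Longrightarrow>
   foldr xorv (map f xs) z = xorv (f k) (foldr xorv (map f (filter (\<lambda>v. v \<noteq> k) xs)) z)"
proof (induction xs)
  case Nil then show ?case by simp
next
  case (Cons y ys)
  show ?case
  proof (cases "y = k")
    case True
    with Cons.prems have "filter (\<lambda>v. v \<noteq> k) ys = ys" by (auto simp: filter_id_conv)
    with True show ?thesis by simp
  next
    case False
    with Cons have "foldr xorv (map f ys) z = xorv (f k) (foldr xorv (map f (filter (\<lambda>v. v \<noteq> k) ys)) z)"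
      by auto
    with False show ?thesis by (simp add: xorv_assoc xorv_comm)
  qed
qed

lemma generic_scheme:
  fixes Rw :: "'r set" and Tx :: "'t set" and rid :: "'r \<Rightarrow> nat" and st :: "'r \<Rightarrow> nat \<Rightarrow> bool"
    and sender :: "'t \<Rightarrow> nat" and rc :: "'t \<Rightarrow> nat set" and rowof :: "'t \<Rightarrow> nat \<Rightarrow> 'r"
  assumes bij: "bij_betw rid Rw {1..F}"
    and finTx: "finite Tx"
    and tx_s: "\<And>t. t \<in> Tx \<Longrightarrow> sender t \<in> {1..K}"
    and tx_f: "\<And>t. t \<in> Tx \<Longrightarrow> finite (rc t)"
    and tx_r: "\<And>t. t \<in> Tx \<Longrightarrow> rc t \<subseteq> {1..K}"
    and tx_w: "\<And>t v. t \<in> Tx \<Longrightarrow> v \<in> rc t \<Longrightarrow> rowof t v \<in> Rw"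
    and tx_ss: "\<And>t v. t \<in> Tx \<Longrightarrow> v \<in> rc t \<Longrightarrow> st (rowof t v) (sender t)"
    and tx_nv: "\<And>t v. t \<in> Tx \<Longrightarrow> v \<in> rc t \<Longrightarrow> \<not> st (rowof t v) v"
    and tx_ov: "\<And>t v v'. t \<in> Tx \<Longrightarrow> v \<in> rc t \<Longrightarrow> v' \<in> rc t \<Longrightarrow> v' \<noteq> v \<Longrightarrow> st (rowof t v') v"
    and cover: "\<And>\<rho> v. \<rho> \<in> Rw \<Longrightarrow> v \<in> {1..K} \<Longrightarrow> \<not> st \<rho> v \<Longrightarrow> \<exists>t\<in>Tx. v \<in> rc t \<and> rowof t v = \<rho>"
    and cache: "\<And>k. k \<in> {1..K} \<Longrightarrow> real N * real (card {\<rho>\<in>Rw. st \<rho> k}) \<le> M * real F"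
    and N1: "N \<ge> 1"
    and R: "R = real (card Tx) / real F"
  shows "d2d_scheme N K M F b R"
proof -
  define row where "row j = inv_into Rw rid j" for j
  define Z where "Z k = {1..N} \<times> {j\<in>{1..F}. st (row j) k}" for k
  define txl where "txl k = (SOME xs. set xs = {t\<in>Tx. sender t = k} \<and> distinct xs)" for k
  define rl where "rl t = (SOME xs. set xs = rc t \<and> distinct xs)" for t
  define blk where "blk d Wst t = foldr xorv (map (\<lambda>v. Wst (d v, rid (rowof t v))) (rl t)) (replicate b False)"
    for d :: "nat \<Rightarrow> nat" and Wst :: "nat \<times> nat \<Rightarrow> bool list" and t
  define enc where "enc d k Wst = map (blk d Wst) (txl k)" for d :: "nat \<Rightarrow> nat" and k Wst
  define ell where "ell (d :: nat \<Rightarrow> nat) k = length (txl k)" for d k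
  define tsel where "tsel k j = (SOME t. t \<in> Tx \<and> k \<in> rc t \<and> rowof t k = row j)" for k j
  define pos where "pos i t = (SOME p. p < length (txl i) \<and> txl i ! p = t)" for i t
  define dec where "dec d k Wst (Y :: nat \<Rightarrow> bool list list) j = (if st (row j) k then Wst (d k, j) else
      xorv (Y (sender (tsel k j)) ! pos (sender (tsel k j)) (tsel k j))
        (foldr xorv (map (\<lambda>v. Wst (d v, rid (rowof (tsel k j) v))) (filter (\<lambda>v. v \<noteq> k) (rl (tsel k j))))
           (replicate b False)))" for d :: "nat \<Rightarrow> nat" and k Wst Y j
  have finS: "finite {t\<in>Tx. sender t = k}" for k using finTx by simp
  have txl: "distinct (txl k) \<and> set (txl k) = {t\<in>Tx. sender t = k}" for k
    using someI_ex[OF finite_distinct_list[OF finS[of k]]] unfolding txl_def by simp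
  have rl: "t \<in> Tx \<Longrightarrow> distinct (rl t) \<and> set (rl t) = rc t" for t
  proof -
    assume "t \<in> Tx"
    then have "finite (rc t)" using tx_f by blast
    from someI_ex[OF finite_distinct_list[OF this]] show ?thesis unfolding rl_def by simp
  qed
  have rowrid: "\<rho> \<in> Rw \<Longrightarrow> row (rid \<rho>) = \<rho>" for \<rho>
    unfolding row_def using bij by (simp add: bij_betw_inv_into_left)
  have ridrow: "j \<in> {1..F} \<Longrightarrow> rid (row j) = j" for j
    unfolding row_def using bij by (simp add: bij_betw_inv_into_right)
  have rowin: "j \<in> {1..F} \<Longrightarrow> row j \<in> Rw" for j
    unfolding row_def using bij by (meson bij_betwE bij_betw_inv_into)
  have ridin: "\<rho> \<in> Rw \<Longrightarrow> rid \<rho> \<in> {1..F}" for \<rho>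
    using bij by (meson bij_betwE)
  have Zcard: "real (card (Z k)) \<le> M * real F" if k: "k \<in> {1..K}" for k
  proof -
    have "bij_betw rid {\<rho>\<in>Rw. st \<rho> k} {j\<in>{1..F}. st (row j) k}"
      unfolding bij_betw_def
    proof
      show "inj_on rid {\<rho> \<in> Rw. st \<rho> k}" using bij by (auto simp: bij_betw_def inj_on_def)
      show "rid ` {\<rho> \<in> Rw. st \<rho> k} = {j \<in> {1..F}. st (row j) k}"
      proof
        show "rid ` {\<rho> \<in> Rw. st \<rho> k} \<subseteq> {j \<in> {1..F}. st (row j) k}" using ridin rowrid by auto
        show "{j \<in> {1..F}. st (row j) k} \<subseteq> rid ` {\<rho> \<in> Rw. st \<rho> k}"
        proof
          fix j assume "j \<in> {j \<in> {1..F}. st (row j) k}"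
          then show "j \<in> rid ` {\<rho> \<in> Rw. st \<rho> k}" using ridrow rowin
            by (metis (mono_tags, lifting) image_eqI mem_Collect_eq)
        qed
      qed
    qed
    then have "card {j\<in>{1..F}. st (row j) k} = card {\<rho>\<in>Rw. st \<rho> k}" by (metis bij_betw_same_card)
    then have "card (Z k) = N * card {\<rho>\<in>Rw. st \<rho> k}" unfolding Z_def by (simp add: card_cartesian_product)
    then show ?thesis using cache[OF k] by simp
  qed
  have Zsub: "Z k \<subseteq> {1..N} \<times> {1..F}" for k unfolding Z_def by auto
  have stored_eq: "stored (Z k) W (d v, rid (rowof t v)) = W (d v, rid (rowof t v))"
    if "d \<in> demands N K" "v \<in> {1..K}" "rowof t v \<in> Rw" "st (rowof t v) k" for k W d v t
  proof -
    have "d v \<in> {1..N}" using that(1,2) unfolding demands_def by (auto simp: PiE_def Pi_def)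
    then have "(d v, rid (rowof t v)) \<in> Z k" unfolding Z_def using that ridin rowrid by auto
    then show ?thesis unfolding stored_def by simp
  qed
  have blk_eq: "blk d (stored (Z (sender t)) W) t = foldr xorv (map (\<lambda>v. W (d v, rid (rowof t v))) (rl t)) (replicate b False)"
    if "d \<in> demands N K" "t \<in> Tx" for d W t
  proof -
    have mc: "map (\<lambda>v. stored (Z (sender t)) W (d v, rid (rowof t v))) (rl t) = map (\<lambda>v. W (d v, rid (rowof t v))) (rl t)"
    proof (rule map_cong[OF refl])
      fix v assume "v \<in> set (rl t)"
      then have v: "v \<in> rc t" using rl[OF that(2)] by simp
      show "stored (Z (sender t)) W (d v, rid (rowof t v)) = W (d v, rid (rowof t v))"
        using stored_eq[OF that(1)] tx_r[OF that(2)] tx_w[OF that(2) v] tx_ss[OF that(2) v] v by blast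
    qed
    show ?thesis unfolding blk_def mc by (rule refl)
  qed
  have Wlen: "length (W (d v, rid (rowof t v))) = b"
    if "W \<in> contents N F b" "d \<in> demands N K" "t \<in> Tx" "v \<in> rc t" for W d t v
  proof -
    have "v \<in> {1..K}" using tx_r[OF that(3)] that(4) by blast
    then have "d v \<in> {1..N}" using that(2) unfolding demands_def by (auto simp: PiE_def Pi_def)
    moreover have "rid (rowof t v) \<in> {1..F}" using tx_w[OF that(3,4)] ridin by blast
    ultimately show ?thesis using that(1) unfolding contents_def by auto
  qed
  have P1: "\<forall>k\<in>{1..K}. Z k \<subseteq> {1..N} \<times> {1..F} \<and> real (card (Z k)) \<le> M * real F"
    using Zsub Zcard by blast
  have P2: "\<forall>d\<in>demands N K. \<forall>k\<in>{1..K}. \<forall>W\<in>contents N F b.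
          length (enc d k (stored (Z k) W)) = ell d k \<and>
          (\<forall>blk\<in>set (enc d k (stored (Z k) W)). length blk = b)"
  proof (intro ballI conjI)
    fix d k W assume d: "d \<in> demands N K" and k: "k \<in> {1..K}" and W: "W \<in> contents N F b"
    show "length (enc d k (stored (Z k) W)) = ell d k" unfolding enc_def ell_def by simp
    fix x assume "x \<in> set (enc d k (stored (Z k) W))"
    then obtain t where t: "t \<in> Tx" "sender t = k" and x: "x = blk d (stored (Z k) W) t"
      unfolding enc_def using txl by auto
    have L: "\<forall>v\<in>set (rl t). length (W (d v, rid (rowof t v))) = b"
      using Wlen[OF W d t(1)] rl[OF t(1)] by auto
    show "length x = b" unfolding x using blk_eq[OF d t(1), of W] t(2)
      foldr_xorv_length[OF L] by simp
  qed
  have P3: "\<forall>d\<in>demands N K. \<forall>k\<in>{1..K}. \<forall>W\<in>contents N F b. \<forall>j\<in>{1..F}.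
          dec d k (stored (Z k) W)
              (\<lambda>i. if i \<in> {1..K} \<and> i \<noteq> k then enc d i (stored (Z i) W) else [])
              j = W (d k, j)"
  proof (intro ballI)
    fix d k W j assume d: "d \<in> demands N K" and k: "k \<in> {1..K}" and W: "W \<in> contents N F b"
      and j: "j \<in> {1..F}"
    show "dec d k (stored (Z k) W) (\<lambda>i. if i \<in> {1..K} \<and> i \<noteq> k then enc d i (stored (Z i) W) else []) j = W (d k, j)"
    proof (cases "st (row j) k")
      case True
      have "d k \<in> {1..N}" using d k unfolding demands_def by (auto simp: PiE_def Pi_def)
      then have "(d k, j) \<in> Z k" unfolding Z_def using j True by auto
      then show ?thesis unfolding dec_def stored_def using True by simp
    next
      case False
      have ex: "\<exists>t\<in>Tx. k \<in> rc t \<and> rowof t k = row j" using cover[OF rowin[OF j] k False] .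
      define t where "t = tsel k j"
      have t: "t \<in> Tx" "k \<in> rc t" "rowof t k = row j"
        unfolding t_def tsel_def using someI_ex[OF ex[unfolded Bex_def]] by auto
      define i where "i = sender t"
      have ik: "i \<noteq> k" unfolding i_def using tx_ss[OF t(1,2)] tx_nv[OF t(1,2)] by metis
      have iK: "i \<in> {1..K}" unfolding i_def using tx_s[OF t(1)] .
      have tin: "t \<in> set (txl i)" using txl t(1) i_def by auto
      then have exp: "\<exists>p. p < length (txl i) \<and> txl i ! p = t" by (metis in_set_conv_nth)
      have pp: "pos i t < length (txl i) \<and> txl i ! pos i t = t"
        unfolding pos_def using someI_ex[OF exp] .
      have Yi: "enc d i (stored (Z i) W) ! pos i t = blk d (stored (Z i) W) t"
        unfolding enc_def using pp by simp
      define f where "f v = W (d v, rid (rowof t v))" for v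
      have B: "blk d (stored (Z i) W) t = foldr xorv (map f (rl t)) (replicate b False)"
        unfolding f_def i_def using blk_eq[OF d t(1)] by simp
      have O: "map (\<lambda>v. stored (Z k) W (d v, rid (rowof t v))) (filter (\<lambda>v. v \<noteq> k) (rl t))
           = map f (filter (\<lambda>v. v \<noteq> k) (rl t))"
      proof (rule map_cong[OF refl])
        fix v assume "v \<in> set (filter (\<lambda>v. v \<noteq> k) (rl t))"
        then have v: "v \<in> rc t" "v \<noteq> k" using rl[OF t(1)] by auto
        show "stored (Z k) W (d v, rid (rowof t v)) = f v"
          unfolding f_def using stored_eq[OF d] tx_r[OF t(1)] tx_w[OF t(1) v(1)] tx_ov[OF t(1) t(2) v(1,2)] v by blast
      qed
      have dist: "distinct (rl t)" "k \<in> set (rl t)" using rl[OF t(1)] t(2) by auto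
      have lens: "\<forall>v\<in>set (filter (\<lambda>v. v \<noteq> k) (rl t)). length (f v) = b"
        unfolding f_def using Wlen[OF W d t(1)] rl[OF t(1)] by auto
      have fk: "f k = W (d k, j)" unfolding f_def using t(3) ridrow[OF j] by simp
      have lfk: "length (f k) = b" unfolding f_def using Wlen[OF W d t(1) t(2)] .
      have D1: "dec d k (stored (Z k) W) Y j = xorv (Y i ! pos i t)
          (foldr xorv (map (\<lambda>v. stored (Z k) W (d v, rid (rowof t v))) (filter (\<lambda>v. v \<noteq> k) (rl t))) (replicate b False))"
        for Y unfolding dec_def t_def i_def using False by simp
      have "dec d k (stored (Z k) W) (\<lambda>i. if i \<in> {1..K} \<and> i \<noteq> k then enc d i (stored (Z i) W) else []) j
          = xorv (foldr xorv (map f (rl t)) (replicate b False))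
                 (foldr xorv (map f (filter (\<lambda>v. v \<noteq> k) (rl t))) (replicate b False))"
        unfolding D1 O using ik iK Yi B by simp
      also have "\<dots> = f k"
        using foldr_xorv_pick[OF dist, of f "replicate b False"] xorv_cancel foldr_xorv_length[OF lens] lfk
        by simp
      finally show ?thesis using fk by simp
    qed
  qed
  have dem_ne: "demands N K \<noteq> {}"
  proof -
    have "(\<lambda>k. if k \<in> {1..K} then 1 else undefined) \<in> demands N K"
      unfolding demands_def using N1 by (auto simp: PiE_def Pi_def extensional_def)
    then show ?thesis by blast
  qed
  have dem_fin: "finite (demands N K)" unfolding demands_def by (simp add: finite_PiE)
  have sumell: "(\<Sum>k=1..K. real (ell d k)) = real (card Tx)" for d
  proof -
    have lc: "length (txl k) = card {t\<in>Tx. sender t = k}" for k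
      using txl[of k] distinct_card by metis
    have "(\<Sum>k=1..K. ell d k) = (\<Sum>k=1..K. card {t\<in>Tx. sender t = k})"
      unfolding ell_def lc by simp
    also have "\<dots> = card Tx"
    proof -
      have "(\<Sum>k\<in>{1..K}. card {t\<in>Tx. sender t = k}) = (\<Sum>k\<in>{1..K}. \<Sum>t\<in>{t\<in>Tx. sender t = k}. (1::nat))"
        by simp
      also have "\<dots> = (\<Sum>t\<in>Tx. (1::nat))"
        by (rule sum.group) (use finTx tx_s in auto)
      finally show ?thesis by simp
    qed
    finally show ?thesis by (metis of_nat_sum)
  qed
  have P4: "R = Max ((\<lambda>d. (\<Sum>k=1..K. real (ell d k)) / real F) ` demands N K)"
  proof -
    have "(\<lambda>d. (\<Sum>k=1..K. real (ell d k)) / real F) ` demands N K = {R}"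
      using dem_ne sumell R by auto
    then show ?thesis by simp
  qed
  show ?thesis unfolding d2d_scheme_def
    by (rule exI[of _ Z], rule exI[of _ enc], rule exI[of _ ell], rule exI[of _ dec], intro conjI P1 P2 P3 P4)
qed

definition grp :: "nat \<Rightarrow> nat" where "grp x = (x - 1) div 4"
definition UG :: "nat set \<Rightarrow> nat set" where "UG Gs = {x. 1 \<le> x \<and> grp x \<in> Gs}"
definition pp :: "nat set \<Rightarrow> nat" where
  "pp A = (\<Sum>x\<in>A. card {y\<in>A. y \<noteq> x \<and> grp y = grp x})"
definition kk :: "nat set \<Rightarrow> nat \<Rightarrow> nat" where
  "kk A v = card {y\<in>A. grp y = grp v}"
definition SS :: "nat set \<Rightarrow> nat \<Rightarrow> nat set set" where
  "SS X n = {B. B \<subseteq> X \<and> card B = n}"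

lemma grp_eq_iff: "1 \<le> x \<and> grp x = g \<longleftrightarrow> 4*g+1 \<le> x \<and> x \<le> 4*g+4"
proof -
  have A: "g \<le> (x-1) div 4 \<longleftrightarrow> g*4 \<le> x-1" by (rule less_eq_div_iff_mult_less_eq) simp
  have B: "(x-1) div 4 < g+1 \<longleftrightarrow> x-1 < (g+1)*4" by (rule div_less_iff_less_mult) simp
  have "grp x = g \<longleftrightarrow> g \<le> (x-1) div 4 \<and> (x-1) div 4 < g+1" unfolding grp_def by linarith
  then show ?thesis using A B by linarith
qed

lemma UG_single: "UG {g} = {4*g+1..4*g+4}"
proof (rule set_eqI)
  fix x show "x \<in> UG {g} \<longleftrightarrow> x \<in> {4*g+1..4*g+4}"
    unfolding UG_def mem_Collect_eq singleton_iff atLeastAtMost_iff by (rule grp_eq_iff)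
qed

lemma card_UG_single: "card (UG {g}) = 4"
  unfolding UG_single by simp

lemma UG_insert: "UG (insert g Gs) = UG {g} \<union> UG Gs"
  unfolding UG_def by auto

lemma UG_disj: "g \<notin> Gs \<Longrightarrow> UG {g} \<inter> UG Gs = {}"
  unfolding UG_def by auto

lemma UG_lessThan: "UG {..<m} = {1..4*m}"
proof (rule set_eqI)
  fix x
  have B: "(x-1) div 4 < m \<longleftrightarrow> x-1 < m*4" by (rule div_less_iff_less_mult) simp
  show "x \<in> UG {..<m} \<longleftrightarrow> x \<in> {1..4*m}"
    unfolding UG_def grp_def mem_Collect_eq lessThan_iff atLeastAtMost_iff using B by linarith
qed

lemma UG_UN: "UG Gs = (\<Union>g\<in>Gs. UG {g})"
  unfolding UG_def by blast

lemma finite_UG: "finite Gs \<Longrightarrow> finite (UG Gs)"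
  unfolding UG_UN[of Gs] UG_single by blast

lemma card_UG: "finite Gs \<Longrightarrow> card (UG Gs) = 4 * card Gs"
proof (induction Gs rule: finite_induct)
  case empty then show ?case by (simp add: UG_def)
next
  case (insert g Gs)
  have f: "finite (UG {g})" "finite (UG Gs)" using finite_UG insert(1) by auto
  have "card (UG (insert g Gs)) = card (UG {g}) + card (UG Gs)"
    unfolding UG_insert[of g Gs] using card_Un_disjoint[OF f UG_disj[OF insert(2)]] .
  also have "\<dots> = 4 + 4 * card Gs" using card_UG_single insert(3) by simp
  also have "\<dots> = 4 * card (insert g Gs)" using insert(1,2) by simp
  finally show ?case .
qed

lemma pp_insert:
  assumes "finite A" "v \<notin> A"
  shows "pp (insert v A) = pp A + 2 * kk A v"
proof -
  have e1: "{y\<in>insert v A. y \<noteq> v \<and> grp y = grp v} = {y\<in>A. grp y = grp v}" using assms by auto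
  have e2: "card {y\<in>insert v A. y \<noteq> x \<and> grp y = grp x} = card {y\<in>A. y \<noteq> x \<and> grp y = grp x} + (if grp v = grp x then 1 else 0)"
    if "x \<in> A" for x
  proof (cases "grp v = grp x")
    case True
    then have "{y\<in>insert v A. y \<noteq> x \<and> grp y = grp x} = insert v {y\<in>A. y \<noteq> x \<and> grp y = grp x}"
      using that assms by auto
    then show ?thesis using assms True by simp
  next
    case False
    then have "{y\<in>insert v A. y \<noteq> x \<and> grp y = grp x} = {y\<in>A. y \<noteq> x \<and> grp y = grp x}"
      using that assms by auto
    then show ?thesis using False by simp
  qed
  have "pp (insert v A) = card {y\<in>A. grp y = grp v} + (\<Sum>x\<in>A. card {y\<in>insert v A. y \<noteq> x \<and> grp y = grp x})"
    unfolding pp_def using assms e1 by simp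
  also have "(\<Sum>x\<in>A. card {y\<in>insert v A. y \<noteq> x \<and> grp y = grp x}) = pp A + (\<Sum>x\<in>A. if grp v = grp x then 1 else 0)"
    unfolding pp_def using e2 by (simp add: sum.distrib)
  also have "(\<Sum>x\<in>A. if grp v = grp x then 1 else (0::nat)) = kk A v"
    unfolding kk_def using assms(1) by (simp add: sum.If_cases Int_def eq_commute[of "grp v"])
  finally show ?thesis unfolding kk_def by simp
qed

lemma kk_insert: "finite A \<Longrightarrow> a \<notin> A \<Longrightarrow> kk (insert a A) v = kk A v + (if grp a = grp v then 1 else 0)"
proof (cases "grp a = grp v")
  case True
  assume "finite A" "a \<notin> A"
  moreover have "{y\<in>insert a A. grp y = grp v} = insert a {y\<in>A. grp y = grp v}" using True by auto
  ultimately show ?thesis unfolding kk_def using True by simp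
next
  case False
  assume "finite A" "a \<notin> A"
  moreover have "{y\<in>insert a A. grp y = grp v} = {y\<in>A. grp y = grp v}" using False by auto
  ultimately show ?thesis unfolding kk_def using False by simp
qed

lemma pp_empty[simp]: "pp {} = 0" unfolding pp_def by simp
lemma kk_empty[simp]: "kk {} v = 0" unfolding kk_def by simp

lemma pp_union:
  assumes "finite S" "finite B" "\<And>x y. x \<in> S \<Longrightarrow> y \<in> B \<Longrightarrow> grp x \<noteq> grp y"
  shows "pp (S \<union> B) = pp S + pp B"
  using assms
proof (induction S rule: finite_induct)
  case empty then show ?case by simp
next
  case (insert s S)
  have sB: "s \<notin> B" using insert.prems by blast
  have "kk (S \<union> B) s = kk S s"
  proof -
    have "{y \<in> S \<union> B. grp y = grp s} = {y\<in>S. grp y = grp s}" using insert.prems by fastforce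
    then show ?thesis unfolding kk_def by simp
  qed
  moreover have "pp (insert s (S \<union> B)) = pp (S \<union> B) + 2 * kk (S \<union> B) s"
    by (rule pp_insert) (use insert sB in auto)
  moreover have "pp (insert s S) = pp S + 2 * kk S s" by (rule pp_insert) (use insert in auto)
  moreover have "pp (S \<union> B) = pp S + pp B" using insert by auto
  ultimately show ?case by simp
qed

lemma pp_onegroup:
  assumes "finite S" "\<And>x y. x \<in> S \<Longrightarrow> y \<in> S \<Longrightarrow> grp x = grp y"
  shows "pp S = card S * (card S - 1)"
  using assms
proof (induction S rule: finite_induct)
  case empty then show ?case by simp
next
  case (insert s S)
  have "kk S s = card S"
  proof -
    have "{y \<in> S. grp y = grp s} = S" using insert.prems by auto
    then show ?thesis unfolding kk_def by simp
  qed
  moreover have "pp (insert s S) = pp S + 2 * kk S s" by (rule pp_insert) (use insert in auto)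
  moreover have "pp S = card S * (card S - 1)" using insert by auto
  ultimately show ?case using insert by (cases "card S") auto
qed

lemma pp_two: "a \<noteq> b \<Longrightarrow> pp {a, b} = (if grp a = grp b then 2 else 0)"
  using pp_insert[of "{b}" a] pp_insert[of "{}" b] kk_insert[of "{}" b a] by auto

lemma kk_three: "a \<noteq> b \<Longrightarrow> a \<noteq> c \<Longrightarrow> b \<noteq> c \<Longrightarrow>
  kk {a,b,c} v = (if grp a = grp v then 1 else 0) + (if grp b = grp v then 1 else 0) + (if grp c = grp v then 1 else 0)"
  using kk_insert[of "{b,c}" a v] kk_insert[of "{c}" b v] kk_insert[of "{}" c v] by auto

lemma pp_three: "a \<noteq> b \<Longrightarrow> a \<noteq> c \<Longrightarrow> b \<noteq> c \<Longrightarrow>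
  pp {a,b,c} = 2 * ((if grp a = grp b then 1 else 0) + (if grp a = grp c then 1 else 0) + (if grp b = grp c then 1 else 0))"
  using pp_insert[of "{b,c}" a] pp_two[of b c] kk_insert[of "{c}" b a] kk_insert[of "{}" c a] by auto

lemma finite_SS: "finite X \<Longrightarrow> finite (SS X k)"
  unfolding SS_def by (rule finite_subset[of _ "Pow X"]) auto

lemma card_SS: "finite X \<Longrightarrow> card (SS X k) = card X choose k"
  unfolding SS_def by (rule n_subsets)

lemma split_subsets:
  assumes fU: "finite U" and fV: "finite V" and disj: "U \<inter> V = {}"
  shows "(\<Sum>A\<in>SS (V \<union> U) n. h A) = (\<Sum>j\<le>n. \<Sum>S\<in>SS V j. \<Sum>B\<in>SS U (n - j). h (S \<union> B))"
proof -
  have fVU: "finite (V \<union> U)" using fU fV by simp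
  have "(\<Sum>A\<in>SS (V \<union> U) n. h A) = (\<Sum>j\<le>n. \<Sum>A\<in>{A\<in>SS (V \<union> U) n. card (A \<inter> V) = j}. h A)"
  proof (rule sum.group[symmetric])
    show "finite (SS (V \<union> U) n)" using finite_SS[OF fVU] .
    show "finite {..n}" by simp
    show "(\<lambda>A. card (A \<inter> V)) ` SS (V \<union> U) n \<subseteq> {..n}"
    proof
      fix x assume "x \<in> (\<lambda>A. card (A \<inter> V)) ` SS (V \<union> U) n"
      then obtain A where A: "A \<in> SS (V \<union> U) n" "x = card (A \<inter> V)" by blast
      have "finite A" using A(1) fVU unfolding SS_def by (auto intro: finite_subset)
      then have "card (A \<inter> V) \<le> card A" by (intro card_mono) auto
      then show "x \<in> {..n}" using A unfolding SS_def by auto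
    qed
  qed
  also have "\<dots> = (\<Sum>j\<le>n. \<Sum>S\<in>SS V j. \<Sum>B\<in>SS U (n - j). h (S \<union> B))"
  proof (rule sum.cong[OF refl])
    fix j assume j: "j \<in> {..n}"
    let ?P = "SS V j \<times> SS U (n - j)"
    let ?T = "{A\<in>SS (V \<union> U) n. card (A \<inter> V) = j}"
    have L: "\<forall>a\<in>?P. (\<lambda>A. (A \<inter> V, A \<inter> U)) ((\<lambda>(S, B). S \<union> B) a) = a"
    proof
      fix a assume "a \<in> ?P"
      then obtain S B where a: "a = (S, B)" "S \<subseteq> V" "B \<subseteq> U" unfolding SS_def by auto
      then show "(\<lambda>A. (A \<inter> V, A \<inter> U)) ((\<lambda>(S, B). S \<union> B) a) = a" using disj by auto
    qed
    have R: "\<forall>A\<in>?T. (\<lambda>(S, B). S \<union> B) ((\<lambda>A. (A \<inter> V, A \<inter> U)) A) = A"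
      unfolding SS_def by auto
    have I1: "(\<lambda>(S, B). S \<union> B) ` ?P \<subseteq> ?T"
    proof
      fix x assume "x \<in> (\<lambda>(S, B). S \<union> B) ` ?P"
      then obtain S B where x: "x = S \<union> B" "S \<subseteq> V" "B \<subseteq> U" "card S = j" "card B = n - j"
        unfolding SS_def by auto
      have fS: "finite S" "finite B" using x fU fV by (auto intro: finite_subset)
      have SB: "S \<inter> B = {}" using x disj by auto
      have "card (S \<union> B) = n" using card_Un_disjoint[OF fS SB] x j by simp
      moreover have "(S \<union> B) \<inter> V = S" using x disj by auto
      ultimately show "x \<in> ?T" using x unfolding SS_def by auto
    qed
    have I2: "(\<lambda>A. (A \<inter> V, A \<inter> U)) ` ?T \<subseteq> ?P"
    proof
      fix x assume "x \<in> (\<lambda>A. (A \<inter> V, A \<inter> U)) ` ?T"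
      then obtain A where x: "x = (A \<inter> V, A \<inter> U)" "A \<subseteq> V \<union> U" "card A = n" "card (A \<inter> V) = j"
        unfolding SS_def by auto
      have fA: "finite (A \<inter> V)" "finite (A \<inter> U)" using fU fV by auto
      have "A = (A \<inter> V) \<union> (A \<inter> U)" using x by auto
      then have "card A = card (A \<inter> V) + card (A \<inter> U)"
        using card_Un_disjoint[OF fA] disj by auto
      then have "card (A \<inter> U) = n - j" using x by simp
      then show "x \<in> ?P" using x unfolding SS_def by auto
    qed
    have bij: "bij_betw (\<lambda>(S, B). S \<union> B) ?P ?T"
      by (rule bij_betw_byWitness[OF L R I1 I2])
    have "(\<Sum>A\<in>?T. h A) = (\<Sum>x\<in>?P. h ((\<lambda>(S, B). S \<union> B) x))"
      by (rule sum.reindex_bij_betw[OF bij, symmetric])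
    also have "\<dots> = (\<Sum>S\<in>SS V j. \<Sum>B\<in>SS U (n - j). h (S \<union> B))"
      by (simp add: sum.cartesian_product case_prod_beta)
    finally show "(\<Sum>A\<in>?T. h A) = (\<Sum>S\<in>SS V j. \<Sum>B\<in>SS U (n - j). h (S \<union> B))" .
  qed
  finally show ?thesis .
qed

definition Phi :: "nat set \<Rightarrow> nat \<Rightarrow> (nat \<Rightarrow> nat) \<Rightarrow> nat" where
  "Phi X k h = (\<Sum>B\<in>SS X k. h (pp B))"

lemma grp_UG_single: "x \<in> UG {g} \<Longrightarrow> grp x = g"
  unfolding UG_def by auto

lemma grp_UG: "x \<in> UG Gs \<Longrightarrow> grp x \<in> Gs"
  unfolding UG_def by auto

lemma pp_split_group:
  assumes "finite Gs" "g \<notin> Gs" "S \<in> SS (UG {g}) j" "B \<in> SS (UG Gs) k"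
  shows "pp (S \<union> B) = j * (j - 1) + pp B"
proof -
  have fS: "finite S" using assms(3) finite_UG[of "{g}"] unfolding SS_def by (auto intro: finite_subset)
  have fB: "finite B" using assms(1,4) finite_UG[of Gs] unfolding SS_def by (auto intro: finite_subset)
  have U1: "pp (S \<union> B) = pp S + pp B"
  proof (rule pp_union[OF fS fB])
    fix x y assume "x \<in> S" "y \<in> B"
    then have "grp x = g" "grp y \<in> Gs" using assms(3,4) grp_UG_single grp_UG unfolding SS_def by auto
    then show "grp x \<noteq> grp y" using assms(2) by auto
  qed
  have Ssub: "S \<subseteq> UG {g}" using assms(3) unfolding SS_def by simp
  have "pp S = card S * (card S - 1)"
    by (rule pp_onegroup[OF fS]) (metis Ssub grp_UG_single subsetD)
  then show ?thesis using U1 assms(3) unfolding SS_def by simp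
qed

lemma split_pp:
  assumes "finite Gs" "g \<notin> Gs"
  shows "Phi (UG (insert g Gs)) n h = (\<Sum>j\<le>n. (4 choose j) * Phi (UG Gs) (n - j) (\<lambda>q. h (j * (j - 1) + q)))"
proof -
  have fU: "finite (UG Gs)" using finite_UG[OF assms(1)] .
  have fV: "finite (UG {g})" using finite_UG[of "{g}"] by simp
  have d: "UG Gs \<inter> UG {g} = {}" using UG_disj[OF assms(2)] by auto
  have "Phi (UG (insert g Gs)) n h = (\<Sum>j\<le>n. \<Sum>S\<in>SS (UG {g}) j. \<Sum>B\<in>SS (UG Gs) (n - j). h (pp (S \<union> B)))"
    unfolding Phi_def UG_insert[of g Gs] by (rule split_subsets[OF fU fV d])
  also have "\<dots> = (\<Sum>j\<le>n. \<Sum>S\<in>SS (UG {g}) j. Phi (UG Gs) (n - j) (\<lambda>q. h (j * (j - 1) + q)))"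
    unfolding Phi_def using pp_split_group[OF assms] by (intro sum.cong refl) simp
  also have "\<dots> = (\<Sum>j\<le>n. (4 choose j) * Phi (UG Gs) (n - j) (\<lambda>q. h (j * (j - 1) + q)))"
    using card_SS[OF fV] card_UG_single by simp
  finally show ?thesis .
qed

lemma card_SS_mem:
  assumes "finite V" "u \<in> V" "j \<ge> 1"
  shows "card {S\<in>SS V j. u \<in> S} = (card V - 1) choose (j - 1)"
proof -
  have "bij_betw (\<lambda>S. S - {u}) {S\<in>SS V j. u \<in> S} (SS (V - {u}) (j - 1))"
  proof (rule bij_betw_byWitness[where f' = "insert u"])
    show "\<forall>a\<in>{S \<in> SS V j. u \<in> S}. insert u (a - {u}) = a" by auto
    show "\<forall>a'\<in>SS (V - {u}) (j - 1). insert u a' - {u} = a'" unfolding SS_def by auto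
    show "(\<lambda>S. S - {u}) ` {S \<in> SS V j. u \<in> S} \<subseteq> SS (V - {u}) (j - 1)"
    proof
      fix x assume "x \<in> (\<lambda>S. S - {u}) ` {S \<in> SS V j. u \<in> S}"
      then obtain S where S: "x = S - {u}" "S \<subseteq> V" "card S = j" "u \<in> S" unfolding SS_def by auto
      have "finite S" using S assms by (auto intro: finite_subset)
      then show "x \<in> SS (V - {u}) (j - 1)" using S unfolding SS_def by auto
    qed
    show "insert u ` SS (V - {u}) (j - 1) \<subseteq> {S \<in> SS V j. u \<in> S}"
    proof
      fix x assume "x \<in> insert u ` SS (V - {u}) (j - 1)"
      then obtain T where T: "x = insert u T" "T \<subseteq> V - {u}" "card T = j - 1" unfolding SS_def by auto
      have "finite T" using T assms by (auto intro: finite_subset)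
      moreover have "u \<notin> T" using T by auto
      ultimately have "card x = j" using T assms by simp
      then show "x \<in> {S \<in> SS V j. u \<in> S}" using T assms unfolding SS_def by auto
    qed
  qed
  then have "card {S\<in>SS V j. u \<in> S} = card (SS (V - {u}) (j - 1))" by (rule bij_betw_same_card)
  also have "\<dots> = (card V - 1) choose (j - 1)" using card_SS[of "V - {u}"] assms by simp
  finally show ?thesis .
qed

lemma SS_0: "finite X \<Longrightarrow> SS X 0 = {{}}"
  unfolding SS_def by (auto dest: finite_subset)

lemma split_pp_mem:
  assumes "finite Gs" "g \<notin> Gs" "u \<in> UG {g}"
  shows "(\<Sum>A\<in>SS (UG (insert g Gs)) n. if u \<in> A then h (pp A) else 0)
     = (\<Sum>j\<le>n. (if j = 0 then 0 else 3 choose (j - 1)) * Phi (UG Gs) (n - j) (\<lambda>q. h (j * (j - 1) + q)))"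
proof -
  have fU: "finite (UG Gs)" using finite_UG[OF assms(1)] .
  have fV: "finite (UG {g})" using finite_UG[of "{g}"] by simp
  have d: "UG Gs \<inter> UG {g} = {}" using UG_disj[OF assms(2)] by auto
  have uG: "u \<notin> UG Gs" using assms(3) d by auto
  have "(\<Sum>A\<in>SS (UG (insert g Gs)) n. if u \<in> A then h (pp A) else 0)
     = (\<Sum>j\<le>n. \<Sum>S\<in>SS (UG {g}) j. \<Sum>B\<in>SS (UG Gs) (n - j). if u \<in> S \<union> B then h (pp (S \<union> B)) else 0)"
    unfolding UG_insert[of g Gs] by (rule split_subsets[OF fU fV d])
  also have "\<dots> = (\<Sum>j\<le>n. \<Sum>S\<in>SS (UG {g}) j. if u \<in> S then Phi (UG Gs) (n - j) (\<lambda>q. h (j * (j - 1) + q)) else 0)"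
  proof (intro sum.cong refl)
    fix j S assume S: "S \<in> SS (UG {g}) j"
    have "(\<Sum>B\<in>SS (UG Gs) (n - j). if u \<in> S \<union> B then h (pp (S \<union> B)) else 0)
        = (\<Sum>B\<in>SS (UG Gs) (n - j). if u \<in> S then h (j * (j - 1) + pp B) else 0)"
    proof (intro sum.cong refl)
      fix B assume B: "B \<in> SS (UG Gs) (n - j)"
      have "u \<notin> B" using B uG unfolding SS_def by auto
      then show "(if u \<in> S \<union> B then h (pp (S \<union> B)) else 0) = (if u \<in> S then h (j * (j - 1) + pp B) else 0)"
        using pp_split_group[OF assms(1,2) S B] by simp
    qed
    then show "(\<Sum>B\<in>SS (UG Gs) (n - j). if u \<in> S \<union> B then h (pp (S \<union> B)) else 0)
        = (if u \<in> S then Phi (UG Gs) (n - j) (\<lambda>q. h (j * (j - 1) + q)) else 0)"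
      unfolding Phi_def by simp
  qed
  also have "\<dots> = (\<Sum>j\<le>n. (if j = 0 then 0 else 3 choose (j - 1)) * Phi (UG Gs) (n - j) (\<lambda>q. h (j * (j - 1) + q)))"
  proof (intro sum.cong refl)
    fix j
    have "(\<Sum>S\<in>SS (UG {g}) j. if u \<in> S then Phi (UG Gs) (n - j) (\<lambda>q. h (j * (j - 1) + q)) else 0)
        = card {S\<in>SS (UG {g}) j. u \<in> S} * Phi (UG Gs) (n - j) (\<lambda>q. h (j * (j - 1) + q))"
      using finite_SS[OF fV] by (simp add: sum.If_cases Int_def)
    moreover have "card {S\<in>SS (UG {g}) j. u \<in> S} = (if j = 0 then 0 else 3 choose (j - 1))"
    proof (cases "j = 0")
      case True
      have E: "{S\<in>SS (UG {g}) j. u \<in> S} = {}" using True SS_0[OF fV] by simp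
      show ?thesis unfolding E using True by simp
    next
      case False
      then show ?thesis using card_SS_mem[OF fV assms(3)] card_UG_single by simp
    qed
    ultimately show "(\<Sum>S\<in>SS (UG {g}) j. if u \<in> S then Phi (UG Gs) (n - j) (\<lambda>q. h (j * (j - 1) + q)) else 0)
        = (if j = 0 then 0 else 3 choose (j - 1)) * Phi (UG Gs) (n - j) (\<lambda>q. h (j * (j - 1) + q))" by simp
  qed
  finally show ?thesis .
qed

lemma Phi_0: "finite X \<Longrightarrow> Phi X 0 h = h 0"
  unfolding Phi_def by (simp add: SS_0)

lemma Phi_1: "finite X \<Longrightarrow> Phi X 1 h = h 0 * card X"
proof -
  assume f: "finite X"
  have "Phi X 1 h = (\<Sum>B\<in>SS X 1. h 0)"
    unfolding Phi_def
  proof (intro sum.cong refl)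
    fix B assume "B \<in> SS X 1"
    then have "card B = 1" unfolding SS_def by simp
    then obtain a where "B = {a}" using card_1_singleton_iff[of B] by auto
    then show "h (pp B) = h 0" using pp_insert[of "{}" a] by simp
  qed
  then show ?thesis using card_SS[OF f, of 1] by simp
qed

lemma pp_2: "B \<in> SS X 2 \<Longrightarrow> pp B = 0 \<or> pp B = 2"
proof -
  assume "B \<in> SS X 2"
  then have "card B = 2" unfolding SS_def by simp
  then obtain a b where "B = {a, b}" "a \<noteq> b" by (meson card_2_iff)
  then show ?thesis using pp_two by simp
qed

lemma pp_3: "B \<in> SS X 3 \<Longrightarrow> pp B = 0 \<or> pp B = 2 \<or> pp B = 6"
proof -
  assume "B \<in> SS X 3"
  then have "card B = 3" unfolding SS_def by simp
  then obtain a b c where "B = {a, b, c}" "a \<noteq> b" "b \<noteq> c" "a \<noteq> c" by (meson card_3_iff)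
  then show ?thesis using pp_three[of a b c] by auto
qed

lemma Phi_2: "finite X \<Longrightarrow> h 2 = h 0 \<Longrightarrow> Phi X 2 h = h 0 * (card X choose 2)"
proof -
  assume f: "finite X" and h: "h 2 = h 0"
  have "Phi X 2 h = (\<Sum>B\<in>SS X 2. h 0)"
    unfolding Phi_def
  proof (intro sum.cong refl)
    fix B assume "B \<in> SS X 2"
    then show "h (pp B) = h 0" using pp_2 h by metis
  qed
  then show ?thesis using card_SS[OF f, of 2] by simp
qed

lemma Phi_cong: "(\<And>B. B \<in> SS X k \<Longrightarrow> h (pp B) = h' (pp B)) \<Longrightarrow> Phi X k h = Phi X k h'"
  unfolding Phi_def by (rule sum.cong) auto

lemma Phi_add: "Phi X k (\<lambda>q. h q + h' q) = Phi X k h + Phi X k h'"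
  unfolding Phi_def by (simp add: sum.distrib)

lemma Phi_mult: "Phi X k (\<lambda>q. c * h q) = c * Phi X k h"
  unfolding Phi_def by (simp add: sum_distrib_left)

lemma Phi_zero: "Phi X k (\<lambda>q. 0) = 0"
  unfolding Phi_def by simp

lemma sum_atMost_2: "(\<Sum>j\<le>(2::nat). f j) = f 0 + f 1 + f 2"
proof -
  have "{..(2::nat)} = {0,1,2}" by auto
  then show ?thesis by (simp add: add.assoc)
qed
lemma sum_atMost_3: "(\<Sum>j\<le>(3::nat). f j) = f 0 + f 1 + f 2 + f 3"
proof -
  have "{..(3::nat)} = {0,1,2,3}" by auto
  then show ?thesis by (simp add: add.assoc)
qed
lemma sum_atMost_4: "(\<Sum>j\<le>(4::nat). f j) = f 0 + f 1 + f 2 + f 3 + f 4"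
proof -
  have "{..(4::nat)} = {0,1,2,3,4}" by auto
  then show ?thesis by (simp add: add.assoc)
qed

lemma choose4: "(4::nat) choose 0 = 1" "(4::nat) choose 1 = 4" "(4::nat) choose 2 = 6" "(4::nat) choose 3 = 4" "(4::nat) choose 4 = 1"
  by (simp_all add: eval_nat_numeral)

lemma choose3: "(3::nat) choose 0 = 1" "(3::nat) choose 1 = 3" "(3::nat) choose 2 = 3" "(3::nat) choose 3 = 1"
  by (simp_all add: eval_nat_numeral)

lemma UG_empty: "UG {} = {}" unfolding UG_def by simp

lemma Phi_empty: "k \<ge> 1 \<Longrightarrow> Phi {} k h = 0"
  unfolding Phi_def SS_def by auto

lemma counts:
  assumes "finite Gs"
  shows "int (Phi (UG Gs) 2 (\<lambda>p. if p = 0 then 1 else 0)) = 8 * int (card Gs) * (int (card Gs) - 1)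
       \<and> int (Phi (UG Gs) 2 (\<lambda>p. if p = 2 then 1 else 0)) = 6 * int (card Gs)
       \<and> 3 * int (Phi (UG Gs) 3 (\<lambda>p. if p = 0 then 1 else 0)) = 32 * int (card Gs) * (int (card Gs) - 1) * (int (card Gs) - 2)
       \<and> int (Phi (UG Gs) 3 (\<lambda>p. if p = 2 then 1 else 0)) = 24 * int (card Gs) * (int (card Gs) - 1)
       \<and> int (Phi (UG Gs) 3 (\<lambda>p. if p = 6 then 1 else 0)) = 4 * int (card Gs)"
  using assms
proof (induction Gs rule: finite_induct)
  case empty
  then show ?case by (simp add: UG_empty Phi_empty)
next
  case (insert g Gs)
  let ?m = "int (card Gs)"
  have cm: "int (card (insert g Gs)) = ?m + 1" using insert by simp
  have fU: "finite (UG Gs)" using finite_UG[OF insert(1)] .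
  have cU: "card (UG Gs) = 4 * card Gs" using card_UG[OF insert(1)] .
  note S = split_pp[OF insert(1,2)] sum_atMost_2 sum_atMost_3 Phi_0[OF fU] Phi_1[OF fU] Phi_1[OF fU, unfolded One_nat_def] Phi_2[OF fU] choose4 cU
  have a: "Phi (UG (insert g Gs)) 2 (\<lambda>p. if p = 0 then 1 else 0) = Phi (UG Gs) 2 (\<lambda>p. if p = 0 then 1 else 0) + 16 * card Gs"
    by (simp add: S)
  have b: "Phi (UG (insert g Gs)) 2 (\<lambda>p. if p = 2 then 1 else 0) = Phi (UG Gs) 2 (\<lambda>p. if p = 2 then 1 else 0) + 6"
    by (simp add: S)
  have c: "Phi (UG (insert g Gs)) 3 (\<lambda>p. if p = 0 then 1 else 0) = Phi (UG Gs) 3 (\<lambda>p. if p = 0 then 1 else 0) + 4 * Phi (UG Gs) 2 (\<lambda>p. if p = 0 then 1 else 0)"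
    by (simp add: S)
  have d: "Phi (UG (insert g Gs)) 3 (\<lambda>p. if p = 2 then 1 else 0) = Phi (UG Gs) 3 (\<lambda>p. if p = 2 then 1 else 0) + 4 * Phi (UG Gs) 2 (\<lambda>p. if p = 2 then 1 else 0) + 24 * card Gs"
    by (simp add: S)
  have e: "Phi (UG (insert g Gs)) 3 (\<lambda>p. if p = 6 then 1 else 0) = Phi (UG Gs) 3 (\<lambda>p. if p = 6 then 1 else 0) + 4"
    by (simp add: S)
  show ?case unfolding cm using insert(3) a b c d e by (simp add: algebra_simps)
qed

definition rr :: "nat \<Rightarrow> nat" where
  "rr q = (if q = 0 then 9 else if q = 2 then 8 else if q = 4 then 8 else if q = 6 then 4 else 0)"

lemma Phi3_rr: "Phi X 3 rr = 9 * Phi X 3 (\<lambda>p. if p = 0 then 1 else 0) + 8 * Phi X 3 (\<lambda>p. if p = 2 then 1 else 0)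
    + 4 * Phi X 3 (\<lambda>p. if p = 6 then 1 else 0)"
proof -
  have "Phi X 3 rr = Phi X 3 (\<lambda>q. (9 * (if q = 0 then 1 else 0) + 8 * (if q = 2 then 1 else 0)) + 4 * (if q = 6 then 1 else 0))"
  proof (rule Phi_cong)
    fix B assume "B \<in> SS X 3"
    then have "pp B = 0 \<or> pp B = 2 \<or> pp B = 6" by (rule pp_3)
    then show "rr (pp B) = (9 * (if pp B = 0 then 1 else 0) + 8 * (if pp B = 2 then 1 else 0)) + 4 * (if pp B = 6 then 1 else 0)"
      unfolding rr_def by auto
  qed
  then show ?thesis by (simp only: Phi_add Phi_mult)
qed

lemma two_choose2: "2 * (n choose 2) = n * (n - 1)"
proof (induction n)
  case 0 then show ?case by simp
next
  case (Suc n)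
  have "Suc n choose 2 = n + (n choose 2)"
    by (simp add: numeral_2_eq_2)
  then show ?case using Suc by (cases n) (auto simp: algebra_simps)
qed

lemma deg_formula:
  assumes "finite Gs" "g \<notin> Gs" "u \<in> UG {g}"
  shows "int (\<Sum>A\<in>SS (UG (insert g Gs)) 4. if u \<in> A then rr (pp A) else 0)
       = 16 * int (card Gs) * (6 * (int (card Gs) + 1) * int (card Gs) + 1)"
proof -
  have fU: "finite (UG Gs)" using finite_UG[OF assms(1)] .
  have cU: "card (UG Gs) = 4 * card Gs" using card_UG[OF assms(1)] .
  have p2: "Phi (UG Gs) 2 (\<lambda>q. rr (Suc (Suc q))) = 8 * (4 * card Gs choose 2)"
    using Phi_2[OF fU, of "\<lambda>q. rr (Suc (Suc q))"] cU by (simp add: rr_def eval_nat_numeral)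
  have r: "rr 0 = 9" "rr 2 = 8" "rr 4 = 8" "rr 6 = 4" "rr 12 = 0" "rr 8 = 0" unfolding rr_def by simp_all
  have "(\<Sum>A\<in>SS (UG (insert g Gs)) 4. if u \<in> A then rr (pp A) else 0)
     = Phi (UG Gs) 3 rr + 3 * (8 * (4 * card Gs choose 2)) + 3 * (4 * (4 * card Gs))"
    using r p2 by (simp add: split_pp_mem[OF assms] sum_atMost_4 choose3 Phi_0[OF fU] Phi_1[OF fU]
        Phi_1[OF fU, unfolded One_nat_def] Phi_2[OF fU] cU)
  moreover have "int (2 * (4 * card Gs choose 2)) = int (4 * card Gs) * (int (4 * card Gs) - 1)"
    unfolding two_choose2 by (cases "card Gs") auto
  moreover note counts[OF assms(1)] Phi3_rr[of "UG Gs"]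
  ultimately show ?thesis by (simp add: algebra_simps)
qed

definition xw :: "nat \<Rightarrow> nat \<Rightarrow> nat" where
  "xw p k = (if p = 0 \<and> k = 1 then 1 else if p = 2 \<and> k = 2 then 4 else if p = 6 \<and> k = 3 then 4 else 0)"

lemma three_cases:
  assumes "card C = 3"
  obtains (dist) a b c where "C = {a,b,c}" "a \<noteq> b" "a \<noteq> c" "b \<noteq> c" "grp a \<noteq> grp b" "grp a \<noteq> grp c" "grp b \<noteq> grp c"
  | (pair) a b c where "C = {a,b,c}" "a \<noteq> b" "a \<noteq> c" "b \<noteq> c" "grp a = grp b" "grp c \<noteq> grp a"
  | (trip) a b c where "C = {a,b,c}" "a \<noteq> b" "a \<noteq> c" "b \<noteq> c" "grp a = grp b" "grp c = grp a"
proof -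
  obtain x y z where C: "C = {x,y,z}" "x \<noteq> y" "y \<noteq> z" "x \<noteq> z" using assms card_3_iff by metis
  have C2: "C = {x,z,y}" "C = {y,z,x}" using C(1) by auto
  show ?thesis
  proof (cases "grp x = grp y")
    case True
    show ?thesis
    proof (cases "grp z = grp x")
      case True2: True
      show ?thesis by (rule trip[OF C(1)]) (use C True True2 in auto)
    next
      case False
      show ?thesis by (rule pair[OF C(1)]) (use C True False in auto)
    qed
  next
    case False
    show ?thesis
    proof (cases "grp x = grp z")
      case True
      show ?thesis by (rule pair[OF C2(1)]) (use C True False in auto)
    next
      case False2: False
      show ?thesis
      proof (cases "grp y = grp z")
        case True
        show ?thesis by (rule pair[OF C2(2)]) (use C True False False2 in auto)
      next
        case False3: False
        show ?thesis by (rule dist[OF C(1)]) (use C False False2 False3 in auto)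
      qed
    qed
  qed
qed

lemma sum_if_card: "finite S \<Longrightarrow> (\<Sum>T\<in>S. if P T then c else 0) = c * card {T\<in>S. P T}"
  by (simp add: sum.If_cases Int_def)

lemma UG_mono: "Q \<subseteq> Gs \<Longrightarrow> UG Q \<subseteq> UG Gs"
  unfolding UG_def by auto

lemma local_count:
  assumes fG: "finite Gs" and C: "C \<in> SS (UG Gs) 3" and v: "v \<in> UG Gs" "v \<notin> C"
  shows "(\<Sum>T\<in>UG Gs - C - {v}. xw (pp C) (kk C T)) = rr (pp (insert v C))"
proof -
  let ?U = "UG Gs"
  have fU: "finite ?U" using finite_UG[OF fG] .
  have fC: "finite C" using C fU unfolding SS_def by (auto intro: finite_subset)
  have CU: "C \<subseteq> ?U" using C unfolding SS_def by auto
  have ppi: "pp (insert v C) = pp C + 2 * kk C v" using pp_insert[OF fC v(2)] .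
  have fS: "finite (?U - C - {v})" using fU by simp
  have cC: "card C = 3" using C unfolding SS_def by auto
  show ?thesis
  using cC proof (cases rule: three_cases)
    case (dist a b c)
    let ?Q = "{grp a, grp b, grp c}"
    have ppC: "pp C = 0" using dist pp_three[of a b c] by simp
    have kkT: "kk C T = (if grp T \<in> ?Q then 1 else 0)" for T
      using dist kk_three[of a b c T] by auto
    have QG: "?Q \<subseteq> Gs" using CU dist grp_UG by auto
    have "(\<Sum>T\<in>?U - C - {v}. xw (pp C) (kk C T)) = (\<Sum>T\<in>?U - C - {v}. if grp T \<in> ?Q then 1 else 0)"
      by (rule sum.cong) (auto simp: ppC kkT xw_def)
    also have "\<dots> = card {T\<in>?U - C - {v}. grp T \<in> ?Q}" using sum_if_card[OF fS] by simp
    also have "{T\<in>?U - C - {v}. grp T \<in> ?Q} = UG ?Q - C - {v}"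
      using UG_mono[OF QG] unfolding UG_def by auto
    also have "card (UG ?Q - C - {v}) = (if grp v \<in> ?Q then 8 else 9)"
    proof -
      have cQ: "card ?Q = 3" using dist by simp
      have fQ: "finite (UG ?Q)" using finite_UG[of ?Q] by simp
      have c12: "card (UG ?Q) = 12" using card_UG[of ?Q] cQ by simp
      have CQ: "C \<subseteq> UG ?Q" using dist CU unfolding UG_def by auto
      have c9: "card (UG ?Q - C) = 9" using card_Diff_subset[OF fC CQ] c12 cC by simp
      show ?thesis
      proof (cases "grp v \<in> ?Q")
        case True
        then have "v \<in> UG ?Q - C" using v unfolding UG_def by auto
        then show ?thesis using c9 True by (simp add: card_Diff_singleton)
      next
        case False
        then have "v \<notin> UG ?Q - C" unfolding UG_def by auto
        then show ?thesis using c9 False by simp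
      qed
    qed
    also have "\<dots> = rr (pp (insert v C))" unfolding ppi ppC kkT rr_def by simp
    finally show ?thesis .
  next
    case (pair a b c)
    have ppC: "pp C = 2" using pair pp_three[of a b c] by simp
    have kkT: "kk C T = (if grp T = grp a then 2 else if grp T = grp c then 1 else 0)" for T
      using pair kk_three[of a b c T] by auto
    have aG: "grp a \<in> Gs" using CU pair grp_UG by auto
    have "(\<Sum>T\<in>?U - C - {v}. xw (pp C) (kk C T)) = (\<Sum>T\<in>?U - C - {v}. if grp T = grp a then 4 else 0)"
      by (rule sum.cong) (auto simp: ppC kkT xw_def)
    also have "\<dots> = 4 * card {T\<in>?U - C - {v}. grp T = grp a}" using sum_if_card[OF fS] by simp
    also have "{T\<in>?U - C - {v}. grp T = grp a} = UG {grp a} - {a, b} - {v}"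
      using UG_mono[of "{grp a}" Gs] aG pair unfolding UG_def by auto
    also have "card (UG {grp a} - {a, b} - {v}) = (if grp v = grp a then 1 else 2)"
    proof -
      have c4: "card (UG {grp a}) = 4" by (rule card_UG_single)
      have fQ: "finite (UG {grp a})" using finite_UG[of "{grp a}"] by simp
      have sub: "{a, b} \<subseteq> UG {grp a}" using pair CU unfolding UG_def by auto
      have c2: "card (UG {grp a} - {a, b}) = 2" using card_Diff_subset[OF _ sub] c4 pair by simp
      show ?thesis
      proof (cases "grp v = grp a")
        case True
        then have "v \<in> UG {grp a} - {a, b}" using v pair unfolding UG_def by auto
        then show ?thesis using c2 True by (simp add: card_Diff_singleton)
      next
        case False
        then have "v \<notin> UG {grp a} - {a, b}" unfolding UG_def by auto
        then show ?thesis using c2 False by simp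
      qed
    qed
    also have "4 * \<dots> = rr (pp (insert v C))" unfolding ppi ppC kkT rr_def using pair by auto
    finally show ?thesis .
  next
    case (trip a b c)
    have ppC: "pp C = 6" using trip pp_three[of a b c] by simp
    have kkT: "kk C T = (if grp T = grp a then 3 else 0)" for T
      using trip kk_three[of a b c T] by auto
    have aG: "grp a \<in> Gs" using CU trip grp_UG by auto
    have "(\<Sum>T\<in>?U - C - {v}. xw (pp C) (kk C T)) = (\<Sum>T\<in>?U - C - {v}. if grp T = grp a then 4 else 0)"
      by (rule sum.cong) (auto simp: ppC kkT xw_def)
    also have "\<dots> = 4 * card {T\<in>?U - C - {v}. grp T = grp a}" using sum_if_card[OF fS] by simp
    also have "{T\<in>?U - C - {v}. grp T = grp a} = UG {grp a} - C - {v}"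
      using UG_mono[of "{grp a}" Gs] aG unfolding UG_def by auto
    also have "card (UG {grp a} - C - {v}) = (if grp v = grp a then 0 else 1)"
    proof -
      have c4: "card (UG {grp a}) = 4" by (rule card_UG_single)
      have sub: "C \<subseteq> UG {grp a}" using trip CU unfolding UG_def by auto
      have c1: "card (UG {grp a} - C) = 1" using card_Diff_subset[OF fC sub] c4 cC by simp
      show ?thesis
      proof (cases "grp v = grp a")
        case True
        then have "v \<in> UG {grp a} - C" using v unfolding UG_def by auto
        then show ?thesis using c1 True by (simp add: card_Diff_singleton)
      next
        case False
        then have "v \<notin> UG {grp a} - C" unfolding UG_def by auto
        then show ?thesis using c1 False by simp
      qed
    qed
    also have "4 * \<dots> = rr (pp (insert v C))" unfolding ppi ppC kkT rr_def using trip by auto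
    finally show ?thesis .
  qed
qed

lemma construction:
  fixes m N b :: nat and M :: real
  assumes m2: "m \<ge> 2" and N1: "N \<ge> 1" and Mdef: "M = real N * (real m - 1) / real m"
  shows "d2d_scheme N (4*m) M (m * (16*(m-1)*(6*m*(m-1)+1))) b (4 / (4*real m - 4))"
proof -
  define K where "K = 4 * m"
  define D where "D = 16*(m-1)*(6*m*(m-1)+1)"
  define F where "F = m * D"
  define Gs where "Gs = {..<m}"
  define U where "U = UG Gs"
  have fGs: "finite Gs" unfolding Gs_def by simp
  have U_eq: "U = {1..K}" unfolding U_def Gs_def K_def by (rule UG_lessThan)
  have fU: "finite U" unfolding U_eq by simp
  have cU: "card U = K" unfolding U_eq by simp
  define Rw where "Rw = Sigma (SS U 4) (\<lambda>A. {..<rr (pp A)})"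
  define TS where "TS C v = Sigma (U - C - {v}) (\<lambda>T. {..<xw (pp C) (kk C T)})" for C v
  define idx where "idx C v = (SOME f. bij_betw f (TS C v) {..<rr (pp (insert v C))})" for C v
  define Tx where "Tx = Sigma (SS U 3) (\<lambda>C. Sigma (U - C) (\<lambda>T. {..<xw (pp C) (kk C T)}))"
  define sender where "sender t = fst (snd t)" for t :: "nat set \<times> nat \<times> nat"
  define rc where "rc t = U - fst t - {fst (snd t)}" for t :: "nat set \<times> nat \<times> nat"
  define rowof where "rowof t v = (insert v (fst t), idx (fst t) v (snd t))" for t :: "nat set \<times> nat \<times> nat" and v
  define st where "st \<rho> k = (k \<notin> fst \<rho>)" for \<rho> :: "nat set \<times> nat" and k
  have finSS: "finite (SS U k)" for k using finite_SS[OF fU] .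
  have finRw: "finite Rw" unfolding Rw_def using finSS by auto
  have finTx: "finite Tx" unfolding Tx_def using finSS fU by auto
  have idx_bij: "bij_betw (idx C v) (TS C v) {..<rr (pp (insert v C))}"
    if C: "C \<in> SS U 3" and v: "v \<in> U" "v \<notin> C" for C v
  proof -
    have fT: "finite (TS C v)" unfolding TS_def using fU by auto
    have "card (TS C v) = (\<Sum>T\<in>U - C - {v}. xw (pp C) (kk C T))"
      unfolding TS_def using fU by (simp add: card_SigmaI)
    also have "\<dots> = rr (pp (insert v C))"
      using local_count[OF fGs C[unfolded U_def] v[unfolded U_def]] unfolding U_def .
    finally have "card (TS C v) = card {..<rr (pp (insert v C))}" by simp
    then have "\<exists>f. bij_betw f (TS C v) {..<rr (pp (insert v C))}"
      using finite_same_card_bij[OF fT, of "{..<rr (pp (insert v C))}"] by simp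
    then show ?thesis unfolding idx_def by (rule someI_ex)
  qed
  have SS_fin: "finite A" if "A \<in> SS U k" for A k
    using that fU unfolding SS_def by (auto intro: finite_subset)
  have txrow: "rowof t v \<in> Rw" if t: "t \<in> Tx" and v: "v \<in> rc t" for t v
  proof -
    obtain C T j where tt: "t = (C, T, j)" by (cases t) auto
    have C: "C \<in> SS U 3" and T: "T \<in> U - C" and j: "j < xw (pp C) (kk C T)"
      using t unfolding tt Tx_def by auto
    have vv: "v \<in> U" "v \<notin> C" "v \<noteq> T" using v unfolding rc_def tt by auto
    have "(T, j) \<in> TS C v" unfolding TS_def using T j vv by auto
    then have "idx C v (T, j) < rr (pp (insert v C))" using idx_bij[OF C vv(1,2)] by (auto dest: bij_betwE)
    moreover have "insert v C \<in> SS U 4" using C vv SS_fin[OF C] unfolding SS_def by auto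
    ultimately show ?thesis unfolding rowof_def tt Rw_def by simp
  qed
  \<comment> \<open>the correspondence between delivered entries and row entries\<close>
  define Phi1 where "Phi1 p = (rowof (fst p) (snd p), snd p)" for p :: "(nat set \<times> nat \<times> nat) \<times> nat"
  have inj: "inj_on Phi1 (Sigma Tx rc)"
  proof (rule inj_onI)
    fix p q assume p: "p \<in> Sigma Tx rc" and q: "q \<in> Sigma Tx rc" and e: "Phi1 p = Phi1 q"
    obtain C T j v where pp': "p = ((C, T, j), v)" by (metis prod.collapse)
    obtain C' T' j' v' where qq: "q = ((C', T', j'), v')" by (metis prod.collapse)
    have C: "C \<in> SS U 3" "T \<in> U - C" "j < xw (pp C) (kk C T)" "v \<in> U - C - {T}"
      using p unfolding pp' Tx_def rc_def by auto
    have C': "C' \<in> SS U 3" "T' \<in> U - C'" "j' < xw (pp C') (kk C' T')" "v' \<in> U - C' - {T'}"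
      using q unfolding qq Tx_def rc_def by auto
    have vv: "v' = v" using e unfolding Phi1_def pp' qq by simp
    have ins: "insert v C = insert v C'" using e unfolding Phi1_def pp' qq rowof_def vv by simp
    have CC: "C' = C" using ins C(4) C'(4) vv by (metis Diff_iff insert_Diff_if singletonI Diff_insert_absorb)
    have ii: "idx C v (T, j) = idx C v (T', j')" using e unfolding Phi1_def pp' qq rowof_def vv CC by simp
    have "(T, j) \<in> TS C v" "(T', j') \<in> TS C v" unfolding TS_def using C C' CC vv by auto
    then have "(T, j) = (T', j')" using ii idx_bij[OF C(1), of v] C(4) by (auto dest: bij_betw_imp_inj_on inj_onD)
    then show "p = q" unfolding pp' qq vv CC by simp
  qed
  have surj: "Phi1 ` Sigma Tx rc = Sigma Rw fst"
  proof
    show "Phi1 ` Sigma Tx rc \<subseteq> Sigma Rw fst"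
    proof
      fix y assume "y \<in> Phi1 ` Sigma Tx rc"
      then obtain t v where tv: "t \<in> Tx" "v \<in> rc t" "y = (rowof t v, v)" unfolding Phi1_def by auto
      show "y \<in> Sigma Rw fst" using txrow[OF tv(1,2)] tv(3) unfolding rowof_def by auto
    qed
    show "Sigma Rw fst \<subseteq> Phi1 ` Sigma Tx rc"
    proof
      fix y assume y: "y \<in> Sigma Rw fst"
      obtain A i v where yy: "y = ((A, i), v)" by (metis prod.collapse)
      have A: "A \<in> SS U 4" "i < rr (pp A)" "v \<in> A" using y unfolding yy Rw_def by auto
      define C where "C = A - {v}"
      have AU: "A \<subseteq> U" using A unfolding SS_def by auto
      have fA: "finite A" using SS_fin[OF A(1)] .
      have C: "C \<in> SS U 3" using A AU fA unfolding C_def SS_def by auto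
      have vU: "v \<in> U" "v \<notin> C" using A AU unfolding C_def by auto
      have iC: "insert v C = A" unfolding C_def using A by auto
      have "i \<in> {..<rr (pp (insert v C))}" using A iC by simp
      then obtain Tj where Tj: "Tj \<in> TS C v" "idx C v Tj = i"
        using idx_bij[OF C vU] by (metis bij_betw_def imageE)
      obtain T j where TT: "Tj = (T, j)" by (cases Tj) auto
      have T: "T \<in> U - C - {v}" "j < xw (pp C) (kk C T)" using Tj(1) unfolding TT TS_def by auto
      have t: "(C, T, j) \<in> Tx" unfolding Tx_def using C T by auto
      have vr: "v \<in> rc (C, T, j)" unfolding rc_def using vU T by auto
      have "Phi1 ((C, T, j), v) = y" unfolding Phi1_def rowof_def yy using iC Tj TT by simp
      then show "y \<in> Phi1 ` Sigma Tx rc" using t vr by force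
    qed
  qed
  have cardE: "card (Sigma Tx rc) = card (Sigma Rw fst)"
    using card_image[OF inj] surj by simp
  have cE1: "card (Sigma Tx rc) = card Tx * (K - 4)"
  proof -
    have "card (rc t) = K - 4" if "t \<in> Tx" for t
    proof -
      obtain C T j where tt: "t = (C, T, j)" by (cases t) auto
      have C: "C \<in> SS U 3" and T: "T \<in> U - C" using that unfolding tt Tx_def by auto
      have CU: "C \<subseteq> U" "card C = 3" using C unfolding SS_def by auto
      have "card (U - C) = K - 3" using card_Diff_subset[OF SS_fin[OF C] CU(1)] CU cU by simp
      then have "card (U - C - {T}) = K - 4" using T fU by (simp add: card_Diff_singleton)
      then show ?thesis unfolding rc_def tt by simp
    qed
    moreover have "finite (rc t)" for t unfolding rc_def using fU by simp
    ultimately show ?thesis using finTx by (simp add: card_SigmaI)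
  qed
  have cE2: "card (Sigma Rw fst) = 4 * card Rw"
  proof -
    have "card (fst \<rho>) = 4" if "\<rho> \<in> Rw" for \<rho> using that unfolding Rw_def SS_def by auto
    moreover have "finite (fst \<rho>)" if "\<rho> \<in> Rw" for \<rho> using that SS_fin unfolding Rw_def by auto
    ultimately show ?thesis using finRw by (simp add: card_SigmaI)
  qed
  have deg: "(\<Sum>A\<in>SS U 4. if k \<in> A then rr (pp A) else 0) = D" if k: "k \<in> U" for k
  proof -
    define g where "g = grp k"
    have gG: "g \<in> Gs" using k unfolding U_def g_def by (rule grp_UG)
    have ins: "insert g (Gs - {g}) = Gs" using gG by auto
    have kg: "k \<in> UG {g}" using k unfolding U_def UG_def g_def by auto
    have cG: "card (Gs - {g}) = m - 1" using gG unfolding Gs_def by simp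
    have "int (\<Sum>A\<in>SS U 4. if k \<in> A then rr (pp A) else 0) = 16 * int (m - 1) * (6 * (int (m - 1) + 1) * int (m - 1) + 1)"
      using deg_formula[of "Gs - {g}" g k] fGs kg unfolding U_def ins cG by simp
    also have "\<dots> = 16 * (int m - 1) * (6 * int m * (int m - 1) + 1)" using m2 by (simp add: of_nat_diff)
    also have "\<dots> = int D" unfolding D_def using m2 by (simp add: of_nat_diff) (simp add: algebra_simps)
    finally show ?thesis by (simp only: of_nat_eq_iff)
  qed
  have cRw: "card Rw = (\<Sum>A\<in>SS U 4. rr (pp A))" unfolding Rw_def using finSS by (simp add: card_SigmaI)
  have cRw4: "4 * card Rw = K * D"
  proof -
    have "4 * card Rw = (\<Sum>A\<in>SS U 4. card A * rr (pp A))"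
      unfolding cRw sum_distrib_left by (rule sum.cong) (auto simp: SS_def)
    also have "\<dots> = (\<Sum>A\<in>SS U 4. \<Sum>k\<in>U. if k \<in> A then rr (pp A) else 0)"
    proof (rule sum.cong[OF refl])
      fix A assume A: "A \<in> SS U 4"
      have "(\<Sum>k\<in>U. if k \<in> A then rr (pp A) else 0) = rr (pp A) * card {k\<in>U. k \<in> A}"
        using sum_if_card[OF fU] by simp
      also have "{k\<in>U. k \<in> A} = A" using A unfolding SS_def by auto
      finally show "card A * rr (pp A) = (\<Sum>k\<in>U. if k \<in> A then rr (pp A) else 0)" by simp
    qed
    also have "\<dots> = (\<Sum>k\<in>U. \<Sum>A\<in>SS U 4. if k \<in> A then rr (pp A) else 0)" by (rule sum.swap)
    also have "\<dots> = (\<Sum>k\<in>U. D)" using deg by simp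
    also have "\<dots> = K * D" using cU by simp
    finally show ?thesis .
  qed
  have cRwF: "card Rw = F" using cRw4 unfolding K_def F_def by simp
  have cTx: "card Tx * (K - 4) = 4 * F" using cardE cE1 cE2 cRwF by simp
  have cache_card: "card {\<rho>\<in>Rw. st \<rho> k} = F - D" if k: "k \<in> U" for k
  proof -
    have "{\<rho>\<in>Rw. k \<in> fst \<rho>} = Sigma {A\<in>SS U 4. k \<in> A} (\<lambda>A. {..<rr (pp A)})" unfolding Rw_def by auto
    then have "card {\<rho>\<in>Rw. k \<in> fst \<rho>} = (\<Sum>A\<in>{A\<in>SS U 4. k \<in> A}. rr (pp A))"
      using finSS by (simp add: card_SigmaI)
    also have "\<dots> = D" using deg[OF k] finSS by (simp add: sum.inter_filter)
    finally have c1: "card {\<rho>\<in>Rw. k \<in> fst \<rho>} = D" .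
    have "{\<rho>\<in>Rw. st \<rho> k} = Rw - {\<rho>\<in>Rw. k \<in> fst \<rho>}" unfolding st_def by auto
    then have "card {\<rho>\<in>Rw. st \<rho> k} = card Rw - card {\<rho>\<in>Rw. k \<in> fst \<rho>}"
      using finRw by (simp add: card_Diff_subset)
    then show ?thesis using c1 cRwF by simp
  qed
  obtain rid where rid: "bij_betw rid Rw {1..F}"
    using finite_same_card_bij[OF finRw, of "{1..F}"] cRwF by auto
  have "d2d_scheme N K M F b (real (card Tx) / real F)"
  proof (rule generic_scheme[where Rw = Rw and Tx = Tx and rid = rid and st = st and sender = sender and rc = rc and rowof = rowof])
    show "bij_betw rid Rw {1..F}" by (rule rid)
    show "finite Tx" by (rule finTx)
    show "N \<ge> 1" by (rule N1)
    show "real (card Tx) / real F = real (card Tx) / real F" ..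
    fix t assume t: "t \<in> Tx"
    obtain C T j where tt: "t = (C, T, j)" by (cases t) auto
    have C: "C \<in> SS U 3" and T: "T \<in> U - C" using t unfolding tt Tx_def by auto
    show "sender t \<in> {1..K}" using T unfolding tt sender_def U_eq by simp
    show "finite (rc t)" unfolding rc_def using fU by simp
    show "rc t \<subseteq> {1..K}" unfolding rc_def U_eq by auto
    fix v assume v: "v \<in> rc t"
    show "rowof t v \<in> Rw" by (rule txrow[OF t v])
    show "st (rowof t v) (sender t)" using v unfolding st_def rowof_def sender_def rc_def tt using T by auto
    show "\<not> st (rowof t v) v" unfolding st_def rowof_def by simp
    fix v' assume "v' \<in> rc t" "v' \<noteq> v"
    then show "st (rowof t v') v" using v unfolding st_def rowof_def rc_def tt by auto
  next
    fix \<rho> v assume \<rho>: "\<rho> \<in> Rw" and v: "v \<in> {1..K}" and nst: "\<not> st \<rho> v"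
    have "(\<rho>, v) \<in> Sigma Rw fst" using \<rho> nst unfolding st_def by auto
    then have "(\<rho>, v) \<in> Phi1 ` Sigma Tx rc" using surj by simp
    then obtain p where p: "p \<in> Sigma Tx rc" "Phi1 p = (\<rho>, v)" by (rule imageE) simp
    then have "fst p \<in> Tx" "v \<in> rc (fst p)" "rowof (fst p) v = \<rho>" unfolding Phi1_def by auto
    then show "\<exists>t\<in>Tx. v \<in> rc t \<and> rowof t v = \<rho>" by blast
  next
    fix k assume k: "k \<in> {1..K}"
    have ck: "card {\<rho>\<in>Rw. st \<rho> k} = F - D" using cache_card k U_eq by simp
    have "real (F - D) = (real m - 1) * real D" unfolding F_def using m2 by (simp add: of_nat_diff algebra_simps)
    moreover have "M * real F = real N * ((real m - 1) * real D)" unfolding Mdef F_def using m2 by simp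
    ultimately show "real N * real (card {\<rho>\<in>Rw. st \<rho> k}) \<le> M * real F" using ck by simp
  qed
  moreover have "real (card Tx) / real F = 4 / (4 * real m - 4)"
  proof -
    have Fpos: "F > 0" unfolding F_def D_def using m2 by simp
    have "real (card Tx) * (4 * real m - 4) = 4 * real F"
      using arg_cong[OF cTx, of real] m2 unfolding K_def by (simp add: of_nat_diff)
    then show ?thesis using Fpos m2 by (simp add: field_simps)
  qed
  ultimately show ?thesis unfolding K_def F_def D_def by simp
qed

theorem mainTheorem8:
  fixes N K m :: nat and M :: real
  assumes "N \<ge> 1" and "K = 4 * m" and "m \<ge> 5"
    and "0 < M" and "M \<le> real N"
    and "real K * M / real N = real K - 4"
  shows "d2d_achievable N K M (K * (K - 4) * (3 * K * (K - 4) + 8) div 8) (real N / M - 1)"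
proof -
  obtain m1 where m1: "m = Suc m1" using assms(3) by (cases m) auto
  have Npos: "real N > 0" using assms(1) by simp
  have e: "real K * M = (real K - 4) * real N" using assms(6) Npos by (simp add: field_simps)
  have Mdef: "M = real N * (real m - 1) / real m"
    using e assms(2,3) by (simp add: field_simps)
  have Keq: "K - 4 = 4 * m1" using assms(2) m1 by simp
  have "K * (K - 4) * (3 * K * (K - 4) + 8) = 8 * (m * (16*(m-1)*(6*m*(m-1)+1)))"
    unfolding Keq using assms(2) m1 by (simp add: algebra_simps)
  then have F: "K * (K - 4) * (3 * K * (K - 4) + 8) div 8 = m * (16*(m-1)*(6*m*(m-1)+1))" by simp
  have R: "real N / M - 1 = 4 / (4 * real m - 4)"
    using Mdef Npos assms(3,4) by (simp add: field_simps)
  show ?thesis unfolding d2d_achievable_def F R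
  proof (intro allI impI)
    fix b :: nat
    show "d2d_scheme N K M (m * (16 * (m - 1) * (6 * m * (m - 1) + 1))) b (4 / (4 * real m - 4))"
      unfolding assms(2) by (rule construction) (use assms Mdef in auto)
  qed
qed

end
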